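(* Let $V$ be a finite set, $p:2^V\to\mathbb{Z}$ a fully supermodular function with $p(\emptyset)=0$, $f,g:V\to\mathbb{Z}$ with $f\le g$, $B=B'(p)$, and suppose $B^{\square}:=B\cap T(f,g)$ contains an integral point. Let $T\subseteq V$. Then there exist a box $T(f',g')\subseteq T(f,g)$ and a subset $X_T\subseteq V$ such that an element $m\in B^{\square}\cap\mathbb{Z}^V$ minimizes $\widetilde m(T)$ over $B^{\square}\cap\mathbb{Z}^V$ if and only if $\widetilde m(X_T)=p(X_T)$ and $m\in B\cap\mathbb{Z}^V\cap T(f',g')$.
   Context: $\widetilde x(Z)=\sum_{v\in Z}x(v)$; $B'(p)=\{x\in\mathbb{R}^V:\widetilde x(V)=p(V),\ \widetilde x(Z)\ge p(Z)\ \forall Z\subset V\}$; $T(f,g)=\{x\in\mathbb{R}^V:f\le x\le g\}$. Fully supermodular: $p(X)+p(Y)\le p(X\cap Y)+p(X\cup Y)$ for all $X,Y\subseteq V$. *)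

theory Defs
  imports Complex_Main
begin

text \<open>Vectors in R^V are modelled as functions 'a => real; only their values on V matter.
  x~(Z) is sum x Z.\<close>

definition fully_supermodular :: "'a set \<Rightarrow> ('a set \<Rightarrow> int) \<Rightarrow> bool" where
  "fully_supermodular V p \<longleftrightarrow>
     (\<forall>X Y. X \<subseteq> V \<longrightarrow> Y \<subseteq> V \<longrightarrow> p X + p Y \<le> p (X \<inter> Y) + p (X \<union> Y))"

definition base_polyhedron :: "'a set \<Rightarrow> ('a set \<Rightarrow> int) \<Rightarrow> ('a \<Rightarrow> real) set" where
  "base_polyhedron V p = {x. sum x V = real_of_int (p V) \<and>
      (\<forall>Z. Z \<subset> V \<longrightarrow> sum x Z \<ge> real_of_int (p Z))}"

definition box :: "'a set \<Rightarrow> ('a \<Rightarrow> real) \<Rightarrow> ('a \<Rightarrow> real) \<Rightarrow> ('a \<Rightarrow> real) set" where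
  "box V f g = {x. \<forall>v\<in>V. f v \<le> x v \<and> x v \<le> g v}"

end

theory Submission
  imports Defs
begin

lemma base_iff:
  "(real_of_int \<circ> m) \<in> base_polyhedron V p \<longleftrightarrow> sum m V = p V \<and> (\<forall>Z. Z \<subset> V \<longrightarrow> p Z \<le> sum m Z)"
proof -
  have h: "sum (real_of_int \<circ> m) Z = real_of_int (sum m Z)" for Z by (simp add: o_def)
  show ?thesis unfolding base_polyhedron_def by (simp only: mem_Collect_eq h of_int_eq_iff of_int_le_iff)
qed

lemma box_iff:
  "(real_of_int \<circ> m) \<in> box V (real_of_int \<circ> f) (real_of_int \<circ> g) \<longleftrightarrow> (\<forall>v\<in>V. f v \<le> m v \<and> m v \<le> g v)"
  unfolding box_def by auto

lemma tight_Int_Un: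
  assumes fin: "finite V" and sm: "fully_supermodular V p" and lb: "\<forall>Z. Z \<subseteq> V \<longrightarrow> p Z \<le> sum m Z"
    and X: "X \<subseteq> V" "sum m X = p X" and Y: "Y \<subseteq> V" "sum m Y = p Y"
  shows "sum m (X \<inter> Y) = p (X \<inter> Y) \<and> sum m (X \<union> Y) = p (X \<union> Y)"
proof -
  have fX: "finite X" "finite Y" using fin X Y finite_subset by auto
  have e: "sum m (X \<union> Y) + sum m (X \<inter> Y) = sum m X + sum m Y" using sum.union_inter[OF fX] .
  have s: "p X + p Y \<le> p (X \<inter> Y) + p (X \<union> Y)" using sm X Y unfolding fully_supermodular_def by blast
  have "p (X \<inter> Y) \<le> sum m (X \<inter> Y)" "p (X \<union> Y) \<le> sum m (X \<union> Y)" using lb X(1) Y(1) by (meson Int_lower1 order_trans le_sup_iff)+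
  then show ?thesis using e s X Y by linarith
qed

lemma tight_Inter:
  assumes fin: "finite V" and sm: "fully_supermodular V p" and lb: "\<forall>Z. Z \<subseteq> V \<longrightarrow> p Z \<le> sum m Z"
  shows "finite F \<Longrightarrow> F \<noteq> {} \<Longrightarrow> \<forall>Z\<in>F. Z \<subseteq> V \<and> sum m Z = p Z \<Longrightarrow> \<Inter>F \<subseteq> V \<and> sum m (\<Inter>F) = p (\<Inter>F)"
proof (induction F rule: finite_ne_induct)
  case (singleton x)
  then show ?case by simp
next
  case (insert x F)
  then have "\<Inter>F \<subseteq> V \<and> sum m (\<Inter>F) = p (\<Inter>F)" by simp
  moreover have "x \<subseteq> V" "sum m x = p x" using insert by auto
  ultimately show ?case using tight_Int_Un[OF fin sm lb, of x "\<Inter>F"] by auto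
qed

lemma tight_Union:
  assumes fin: "finite V" and sm: "fully_supermodular V p" and lb: "\<forall>Z. Z \<subseteq> V \<longrightarrow> p Z \<le> sum m Z"
    and p0: "p {} = 0"
  shows "finite F \<Longrightarrow> \<forall>Z\<in>F. Z \<subseteq> V \<and> sum m Z = p Z \<Longrightarrow> \<Union>F \<subseteq> V \<and> sum m (\<Union>F) = p (\<Union>F)"
proof (induction F rule: finite_induct)
  case empty
  then show ?case using p0 by simp
next
  case (insert x F)
  then have "\<Union>F \<subseteq> V \<and> sum m (\<Union>F) = p (\<Union>F)" by simp
  moreover have "x \<subseteq> V" "sum m x = p x" using insert by auto
  ultimately show ?case using tight_Int_Un[OF fin sm lb, of x "\<Union>F"] by auto
qed

theorem theorem5p10:
  fixes V :: "'a set" and p :: "'a set \<Rightarrow> int" and f g :: "'a \<Rightarrow> int" and T :: "'a set"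
  assumes "finite V"
    and "fully_supermodular V p"
    and "p {} = 0"
    and "\<forall>v\<in>V. f v \<le> g v"
    and "\<exists>m :: 'a \<Rightarrow> int. (real_of_int \<circ> m) \<in> base_polyhedron V p \<inter> box V (real_of_int \<circ> f) (real_of_int \<circ> g)"
    and "T \<subseteq> V"
  shows "\<exists>(f' :: 'a \<Rightarrow> int) (g' :: 'a \<Rightarrow> int) X\<^sub>T.
           box V (real_of_int \<circ> f') (real_of_int \<circ> g') \<subseteq> box V (real_of_int \<circ> f) (real_of_int \<circ> g)
         \<and> X\<^sub>T \<subseteq> V
         \<and> (\<forall>m :: 'a \<Rightarrow> int.
              (real_of_int \<circ> m) \<in> base_polyhedron V p \<inter> box V (real_of_int \<circ> f) (real_of_int \<circ> g) \<longrightarrow>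
              ((\<forall>m' :: 'a \<Rightarrow> int.
                  (real_of_int \<circ> m') \<in> base_polyhedron V p \<inter> box V (real_of_int \<circ> f) (real_of_int \<circ> g) \<longrightarrow>
                  sum m T \<le> sum m' T)
               \<longleftrightarrow>
               (sum m X\<^sub>T = p X\<^sub>T \<and> (real_of_int \<circ> m) \<in> base_polyhedron V p
                \<and> (real_of_int \<circ> m) \<in> box V (real_of_int \<circ> f') (real_of_int \<circ> g'))))"
proof -
  note fin = assms(1) and sm = assms(2) and p0 = assms(3) and fg = assms(4) and TV = assms(6)
  have finT: "finite T" using fin TV finite_subset by auto
  let ?P = "\<lambda>m::'a\<Rightarrow>int. (real_of_int \<circ> m) \<in> base_polyhedron V p \<inter> box V (real_of_int \<circ> f) (real_of_int \<circ> g)"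
  have Piff: "?P m \<longleftrightarrow> sum m V = p V \<and> (\<forall>Z. Z \<subset> V \<longrightarrow> p Z \<le> sum m Z) \<and> (\<forall>v\<in>V. f v \<le> m v \<and> m v \<le> g v)" for m
    by (simp add: base_iff box_iff)
  have lbV: "\<forall>Z. Z \<subseteq> V \<longrightarrow> p Z \<le> sum m Z" if "?P m" for m
    using that unfolding Piff by (metis order.order_iff_strict order_refl)
  define S where "S = (\<lambda>m. sum m T) ` {m. ?P m}"
  have "S \<subseteq> {sum f T .. sum g T}"
  proof
    fix s assume "s \<in> S"
    then obtain m where m: "?P m" "s = sum m T" unfolding S_def by auto
    have "sum f T \<le> sum m T" "sum m T \<le> sum g T" using m(1) TV unfolding Piff
      by (auto intro!: sum_mono)
    then show "s \<in> {sum f T .. sum g T}" using m by auto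
  qed
  then have finS: "finite S" using finite_subset by blast
  have neS: "S \<noteq> {}" using assms(5) unfolding S_def by auto
  have "Min S \<in> S" using finS neS by simp
  then obtain m0 where P0: "?P m0" and m0S: "sum m0 T = Min S" unfolding S_def by auto
  have min0: "sum m0 T \<le> sum m T" if "?P m" for m
    using m0S finS that unfolding S_def by simp
  have lb0: "\<forall>Z. Z \<subseteq> V \<longrightarrow> p Z \<le> sum m0 Z" using lbV[OF P0] .
  define tight where "tight Z \<longleftrightarrow> Z \<subseteq> V \<and> sum m0 Z = p Z" for Z
  define T1 where "T1 = {t\<in>T. f t < m0 t}"
  define U1 where "U1 = {u\<in>V-T. m0 u < g u}"
  have sep: "\<exists>Z. tight Z \<and> t\<in>Z \<and> u\<notin>Z" if t: "t\<in>T1" and u: "u\<in>U1" for t u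
  proof (rule ccontr)
    assume no: "\<not> (\<exists>Z. tight Z \<and> t\<in>Z \<and> u\<notin>Z)"
    define m' where "m' = (\<lambda>v. m0 v + (if v = u then 1 else 0) - (if v = t then 1 else 0))"
    have tu: "t \<noteq> u" "t \<in> V" "u \<in> V" "t \<in> T" "u \<notin> T" using t u TV unfolding T1_def U1_def by auto
    have sm': "sum m' Z = sum m0 Z + (if u \<in> Z then 1 else 0) - (if t \<in> Z then 1 else 0)" if "finite Z" for Z
      unfolding m'_def using that by (simp add: sum.distrib sum_subtractf)
    have "?P m'"
      unfolding Piff
    proof (intro conjI allI impI ballI)
      show "sum m' V = p V" using sm'[OF fin] tu P0 unfolding Piff by simp
    next
      fix Z assume Z: "Z \<subset> V"
      then have fZ: "finite Z" using fin finite_subset by blast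
      have ge: "p Z \<le> sum m0 Z" using lb0 Z by auto
      show "p Z \<le> sum m' Z"
      proof (cases "t \<in> Z \<and> u \<notin> Z")
        case True
        then have "sum m0 Z \<noteq> p Z" using no Z unfolding tight_def by auto
        then show ?thesis using ge sm'[OF fZ] True by simp
      next
        case False
        then show ?thesis using ge sm'[OF fZ] by auto
      qed
    next
      fix v assume "v \<in> V"
      then show "f v \<le> m' v" "m' v \<le> g v" using P0 t u tu unfolding Piff m'_def T1_def U1_def
        by auto
    qed
    then have "sum m0 T \<le> sum m' T" using min0 by blast
    then show False using sm'[OF finT] tu by simp
  qed
  define Xt where "Xt t = \<Inter>{Z. tight Z \<and> t \<in> Z}" for t
  define X where "X = \<Union>(Xt ` T1)"
  have tXt: "tight (Xt t)" if tV: "t \<in> V" for t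
  proof -
    let ?F = "{Z. tight Z \<and> t \<in> Z}"
    have F1: "finite ?F"
    proof (rule finite_subset)
      show "?F \<subseteq> Pow V" unfolding tight_def by blast
      show "finite (Pow V)" using fin by simp
    qed
    have "V \<in> ?F" using P0 tV unfolding Piff tight_def by simp
    then have F2: "?F \<noteq> {}" by blast
    have F3: "\<forall>Z\<in>?F. Z \<subseteq> V \<and> sum m0 Z = p Z" unfolding tight_def by blast
    have "\<Inter>?F \<subseteq> V \<and> sum m0 (\<Inter>?F) = p (\<Inter>?F)" using tight_Inter[OF fin sm lb0 F1 F2 F3] .
    then show ?thesis unfolding Xt_def tight_def[of "\<Inter>?F"] .
  qed
  have T1V: "T1 \<subseteq> V" using TV unfolding T1_def by auto
  have tX: "tight X"
  proof -
    have G1: "finite (Xt ` T1)" using finT unfolding T1_def by simp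
    have G2: "\<forall>Z\<in>Xt ` T1. Z \<subseteq> V \<and> sum m0 Z = p Z" using tXt T1V unfolding tight_def by blast
    have "\<Union>(Xt ` T1) \<subseteq> V \<and> sum m0 (\<Union>(Xt ` T1)) = p (\<Union>(Xt ` T1))" using tight_Union[OF fin sm lb0 p0 G1 G2] .
    then show ?thesis unfolding X_def tight_def[of "\<Union>(Xt ` T1)"] .
  qed
  have XV: "X \<subseteq> V" and sX0: "sum m0 X = p X" using tX unfolding tight_def by auto
  have finX: "finite X" using XV fin finite_subset by auto
  have T1X: "T1 \<subseteq> X"
  proof
    fix t assume t: "t \<in> T1"
    have "t \<in> Xt t" unfolding Xt_def by blast
    then show "t \<in> X" unfolding X_def using t by blast
  qed
  have U1X: "u \<notin> X" if uU: "u \<in> U1" for u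
  proof
    assume "u \<in> X"
    then obtain t where t: "t \<in> T1" "u \<in> Xt t" unfolding X_def by auto
    obtain Z where "tight Z" "t \<in> Z" "u \<notin> Z" using sep[OF t(1) uU] by auto
    then show False using t(2) unfolding Xt_def by auto
  qed
  define \<beta> where "\<beta> = p X - sum g (X - T) + sum f (T - X)"
  have split: "sum m T = sum m X - sum m (X - T) + sum m (T - X)" for m :: "'a \<Rightarrow> int"
    using sum.Int_Diff[OF finT, of m X] sum.Int_Diff[OF finX, of m T] by (simp add: Int_commute)
  have weak: "\<beta> \<le> sum m T \<and> (sum m T = \<beta> \<longrightarrow> sum m X = p X \<and> sum m (X - T) = sum g (X - T)
      \<and> sum m (T - X) = sum f (T - X))" if Pm: "?P m" for m
  proof -
    have "p X \<le> sum m X" using lbV[OF Pm] XV by auto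
    moreover have "sum m (X - T) \<le> sum g (X - T)" using Pm XV unfolding Piff by (auto intro!: sum_mono)
    moreover have "sum f (T - X) \<le> sum m (T - X)" using Pm TV unfolding Piff by (auto intro!: sum_mono)
    ultimately show ?thesis using split[of m] unfolding \<beta>_def by linarith
  qed
  have eq0: "sum m0 T = \<beta>"
  proof -
    have "sum m0 (X - T) = sum g (X - T)"
    proof (rule sum.cong[OF refl])
      fix v assume v: "v \<in> X - T"
      then have "v \<notin> U1" using U1X by auto
      then show "m0 v = g v" using v XV P0 unfolding Piff U1_def by force
    qed
    moreover have "sum m0 (T - X) = sum f (T - X)"
    proof (rule sum.cong[OF refl])
      fix v assume v: "v \<in> T - X"
      then have "v \<notin> T1" using T1X by auto
      then show "m0 v = f v" using v TV P0 unfolding Piff T1_def by force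
    qed
    ultimately show ?thesis using split[of m0] sX0 unfolding \<beta>_def by linarith
  qed
  define f' where "f' v = (if v \<in> X - T then g v else f v)" for v
  define g' where "g' v = (if v \<in> T - X then f v else g v)" for v
  show ?thesis
  proof (intro exI conjI allI impI)
    show "box V (real_of_int \<circ> f') (real_of_int \<circ> g') \<subseteq> box V (real_of_int \<circ> f) (real_of_int \<circ> g)"
    proof
      fix x assume x: "x \<in> box V (real_of_int \<circ> f') (real_of_int \<circ> g')"
      have "real_of_int (f v) \<le> x v \<and> x v \<le> real_of_int (g v)" if v: "v \<in> V" for v
      proof -
        have "f v \<le> f' v" "g' v \<le> g v" using fg v unfolding f'_def g'_def by auto
        then have "real_of_int (f v) \<le> real_of_int (f' v)" "real_of_int (g' v) \<le> real_of_int (g v)" by simp_all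
        moreover have "real_of_int (f' v) \<le> x v" "x v \<le> real_of_int (g' v)" using x v unfolding box_def by auto
        ultimately show ?thesis by linarith
      qed
      then show "x \<in> box V (real_of_int \<circ> f) (real_of_int \<circ> g)" unfolding box_def by auto
    qed
  next
    show "X \<subseteq> V" by (rule XV)
  next
    fix m assume Pm: "?P m"
    show "(\<forall>m'. ?P m' \<longrightarrow> sum m T \<le> sum m' T) \<longleftrightarrow>
      (sum m X = p X \<and> (real_of_int \<circ> m) \<in> base_polyhedron V p \<and> (real_of_int \<circ> m) \<in> box V (real_of_int \<circ> f') (real_of_int \<circ> g'))"
    proof
      assume minm: "\<forall>m'. ?P m' \<longrightarrow> sum m T \<le> sum m' T"
      then have "sum m T \<le> sum m0 T" using P0 by blast
      then have "sum m T = \<beta>" using weak[OF Pm] eq0 by linarith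
      then have e: "sum m X = p X" "sum m (X - T) = sum g (X - T)" "sum m (T - X) = sum f (T - X)"
        using weak[OF Pm] by auto
      have mle: "\<forall>v\<in>V. f v \<le> m v \<and> m v \<le> g v" using Pm unfolding Piff by auto
      have eg: "m v = g v" if v: "v \<in> X - T" for v
      proof (rule ccontr)
        assume "m v \<noteq> g v"
        then have "m v < g v" using mle v XV by force
        then have "sum m (X - T) < sum g (X - T)"
          using mle XV v finX by (intro sum_strict_mono_ex1) auto
        then show False using e by simp
      qed
      have ef: "m v = f v" if v: "v \<in> T - X" for v
      proof (rule ccontr)
        assume "m v \<noteq> f v"
        then have "f v < m v" using mle v TV by force
        then have "sum f (T - X) < sum m (T - X)"
          using mle TV v finT by (intro sum_strict_mono_ex1) auto
        then show False using e by simp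
      qed
      have "\<forall>v\<in>V. f' v \<le> m v \<and> m v \<le> g' v"
        using mle eg ef unfolding f'_def g'_def by auto
      then show "sum m X = p X \<and> (real_of_int \<circ> m) \<in> base_polyhedron V p \<and> (real_of_int \<circ> m) \<in> box V (real_of_int \<circ> f') (real_of_int \<circ> g')"
        using e Pm unfolding box_iff by auto
    next
      assume rhs: "sum m X = p X \<and> (real_of_int \<circ> m) \<in> base_polyhedron V p \<and> (real_of_int \<circ> m) \<in> box V (real_of_int \<circ> f') (real_of_int \<circ> g')"
      then have bx: "\<forall>v\<in>V. f' v \<le> m v \<and> m v \<le> g' v" unfolding box_iff by auto
      have mle: "\<forall>v\<in>V. f v \<le> m v \<and> m v \<le> g v" using Pm unfolding Piff by auto
      have "sum m (X - T) = sum g (X - T)"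
      proof (rule sum.cong[OF refl])
        fix v assume v: "v \<in> X - T"
        then show "m v = g v" using bx mle XV unfolding f'_def by force
      qed
      moreover have "sum m (T - X) = sum f (T - X)"
      proof (rule sum.cong[OF refl])
        fix v assume v: "v \<in> T - X"
        then show "m v = f v" using bx mle TV unfolding g'_def by force
      qed
      ultimately have "sum m T = \<beta>" using split[of m] rhs unfolding \<beta>_def by linarith
      then show "\<forall>m'. ?P m' \<longrightarrow> sum m T \<le> sum m' T" using weak by auto
    qed
  qed
qed

end
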